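(* Assume every $f_i$ ($i=1,\dots,q$) and every $g_j$ ($j=1,\dots,m$) is Lipschitz continuous with respect to the continuous variables. Let $x^\star\in\mathcal F$ be a local Pareto optimum of problem (P). Assume that there exists a direction $d\in D^c(x^\star)$ such that, for every $j\in\{1,\dots,m\}$ with $g_j(x^\star)=0$, $$(\xi^{g_j})^\top d<0\quad\text{for all }\xi^{g_j}\in\partial_c g_j(x^\star).$$ Then $x^\star$ is a Pareto stationary point of problem (P).
   Context: Fix integers $n,q\ge 1$ and $m\ge 0$. Let $\{1,\dots,n\}=I^c\cup I^z$ with $I^c\cap I^z=\emptyset$ and $I^c,I^z\neq\emptyset$. For $x\in\mathbb R^n$ write $x_c=(x_i)_{i\in I^c}$ and $x_z=(x_i)_{i\in I^z}$. Let $l,u\in\mathbb R^n$ with $l_i<u_i$ for all $i$ and $l_i,u_i\in\mathbb Z$ for $i\in I^z$. Put $X=\{x\in\mathbb R^n: l_i\le x_i\le u_i,\ i=1,\dots,n\}$ and $\mathcal Z=\{x\in\mathbb R^n: x_i\in\mathbb Z \text{ for } i\in I^z\}$. Let $f_1,\dots,f_q,g_1,\dots,g_m:\mathbb R^n\to\mathbb R$ and $F=(f_1,\dots,f_q)^\top$. Problem (P) is: minimize $F(x)$ subject to $g_j(x)\le 0$ ($j=1,\dots,m$), $x\in X\cap\mathcal Z$; its feasible set is $\mathcal F=\{x\in X\cap\mathcal Z: g_j(x)\le 0,\ j=1,\dots,m\}$. A function $h:\mathbb R^n\to\mathbb R$ is Lipschitz continuous with respect to the continuous variables if there is $L_h$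 with $|h(x)-h(y)|\le L_h\|x-y\|$ for all $x,y\in\mathbb R^n$ with $x_i=y_i$ for all $i\in I^z$. For such $h$, $x\in\mathbb R^n$ and $s\in\mathbb R^n$ with $s_i=0$ for $i\in I^z$, the generalized directional derivative is $h^{Cl}_c(x;s)=\limsup_{y_c\to x_c,\ y_z=x_z,\ t\downarrow 0}\frac{h(y+ts)-h(y)}{t}$, and the generalized gradient with respect to the continuous variables is $\partial_c h(x)=\{v\in\mathbb R^n: v_i=0\ \forall i\in I^z,\ h^{Cl}_c(x;s)\ge s^\top v\ \forall s\in\mathbb R^n \text{ with } s_i=0\ \forall i\in I^z\}$. For $x\in X\cap\mathcal Z$, the cone of feasible continuous directions is $D^c(x)=\{s\in\mathbb R^n: s_i=0\ (i\in I^z);\ s_i\ge 0\ (i\in I^c,\ x_i=l_i);\ s_i\le 0\ (i\in I^c,\ x_i=u_i);\ s_i\in\mathbb R\ (i\in I^c,\ l_i<x_i<u_i)\}$. Vector order: for $a,b\in\mathbb R^q$, $a\le b$ means $a_i\le b_i$ for all $i$ and $a\ne b$. For $x\in X\cap\mathcal Z$, the set of feasible primitive directions is $D^z(x)=\{d\in\mathbb Z^n: d_i=0\ \forall i\in I^c,\ \gcd\{d_i: i\in I^z\}=1,\ x+d\in X\cap\mathcal Z\}$; the discrete neighborhood is $\mathcal B^z(x)=\{x+d: d\in D^z(x)\}$, and for $\rho>0$ the continuous neighborhood is $\mathcal B^c(x;\rho)=\{y\in X: y_z=x_z,\ \|y_c-x_c\|\le\rho\}$. A point $x^\star\in\mathcal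 F$ is a local Pareto optimum of (P) if (1) there is no $y\in\mathcal B^z(x^\star)\cap\mathcal F$ with $F(y)\le F(x^\star)$, and (2) for some $\rho>0$ there is no $y\in\mathcal B^c(x^\star;\rho)\cap\mathcal F$ with $F(y)\le F(x^\star)$. A point $x^\star\in\mathcal F$ is Pareto-Clarke stationary w.r.t. the continuous variables for (P) if there exist $\sigma\in\mathbb R^q$ with $\sigma\ge 0$ componentwise and $\sigma\ne 0$, and $\lambda\in\mathbb R^m$ with $\lambda_j\ge0$ and $\lambda_j g_j(x^\star)=0$ for all $j$, and a vector $\bar\xi\in\sum_{i=1}^q\sigma_i\partial_c f_i(x^\star)+\sum_{j=1}^m\lambda_j\partial_c g_j(x^\star)$ (Minkowski sum) such that $\bar\xi^\top d\ge 0$ for every $d\in D^c(x^\star)$. A point $x^\star\in\mathcal F$ is Pareto stationary for (P) if it is Pareto-Clarke stationary w.r.t. the continuous variables and satisfies condition (1) of local Pareto optimality (no $y\in\mathcal B^z(x^\star)\cap\mathcal F$ with $F(y)\le F(x^\star)$). *)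

theory Defs
  imports "HOL-Analysis.Analysis" "HOL-Library.Liminf_Limsup"
begin

text \<open>Points of R^n are vectors of type real^'n; the index set {1..n} is the finite
type 'n, split into the continuous indices Ic and the integer indices Iz.
Objectives are f i for i < q, constraints g j for j < m.\<close>

definition box_set :: "real^'n \<Rightarrow> real^'n \<Rightarrow> (real^'n) set" where
  "box_set l u = {x. \<forall>i. l$i \<le> x$i \<and> x$i \<le> u$i}"

definition int_set :: "'n set \<Rightarrow> (real^'n) set" where
  "int_set Iz = {x. \<forall>i\<in>Iz. x$i \<in> \<int>}"

definition feasible_set :: "real^'n \<Rightarrow> real^'n \<Rightarrow> 'n set \<Rightarrow> nat \<Rightarrow> (nat \<Rightarrow> real^'n \<Rightarrow> real) \<Rightarrow> (real^'n) set" where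
  "feasible_set l u Iz m g = {x \<in> box_set l u \<inter> int_set Iz. \<forall>j<m. g j x \<le> 0}"

definition pareto_le :: "nat \<Rightarrow> (nat \<Rightarrow> real^'n \<Rightarrow> real) \<Rightarrow> real^'n \<Rightarrow> real^'n \<Rightarrow> bool" where
  "pareto_le q f y x \<longleftrightarrow> (\<forall>i<q. f i y \<le> f i x) \<and> (\<exists>i<q. f i y \<noteq> f i x)"

definition lipschitz_cont_vars :: "'n set \<Rightarrow> (real^'n \<Rightarrow> real) \<Rightarrow> bool" where
  "lipschitz_cont_vars Iz h \<longleftrightarrow>
     (\<exists>L. \<forall>x y. (\<forall>i\<in>Iz. x$i = y$i) \<longrightarrow> \<bar>h x - h y\<bar> \<le> L * norm (x - y))"

definition clarke_dd :: "'n set \<Rightarrow> (real^'n \<Rightarrow> real) \<Rightarrow> real^'n \<Rightarrow> real^'n \<Rightarrow> ereal" where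
  "clarke_dd Iz h x s =
     Limsup ((inf (nhds x) (principal {y. \<forall>i\<in>Iz. y$i = x$i})) \<times>\<^sub>F at_right 0)
       (\<lambda>(y, t). ereal ((h (y + t *\<^sub>R s) - h y) / t))"

definition clarke_grad :: "'n set \<Rightarrow> (real^'n \<Rightarrow> real) \<Rightarrow> real^'n \<Rightarrow> (real^'n) set" where
  "clarke_grad Iz h x = {v. (\<forall>i\<in>Iz. v$i = 0) \<and>
      (\<forall>s. (\<forall>i\<in>Iz. s$i = 0) \<longrightarrow> ereal (s \<bullet> v) \<le> clarke_dd Iz h x s)}"

definition cont_dirs :: "real^'n \<Rightarrow> real^'n \<Rightarrow> 'n set \<Rightarrow> 'n set \<Rightarrow> real^'n \<Rightarrow> (real^'n) set" where
  "cont_dirs l u Ic Iz x = {s. (\<forall>i\<in>Iz. s$i = 0) \<and>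
      (\<forall>i\<in>Ic. x$i = l$i \<longrightarrow> s$i \<ge> 0) \<and>
      (\<forall>i\<in>Ic. x$i = u$i \<longrightarrow> s$i \<le> 0)}"

definition prim_dirs :: "real^'n \<Rightarrow> real^'n \<Rightarrow> 'n set \<Rightarrow> 'n set \<Rightarrow> real^'n \<Rightarrow> (real^'n) set" where
  "prim_dirs l u Ic Iz x = {d. (\<forall>i. d$i \<in> \<int>) \<and> (\<forall>i\<in>Ic. d$i = 0) \<and>
      Gcd ((\<lambda>i. \<lfloor>d$i\<rfloor>) ` Iz) = (1::int) \<and>
      x + d \<in> box_set l u \<inter> int_set Iz}"

definition disc_nbhd :: "real^'n \<Rightarrow> real^'n \<Rightarrow> 'n set \<Rightarrow> 'n set \<Rightarrow> real^'n \<Rightarrow> (real^'n) set" where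
  "disc_nbhd l u Ic Iz x = {x + d | d. d \<in> prim_dirs l u Ic Iz x}"

definition cont_nbhd :: "real^'n \<Rightarrow> real^'n \<Rightarrow> 'n set \<Rightarrow> 'n set \<Rightarrow> real^'n \<Rightarrow> real \<Rightarrow> (real^'n) set" where
  "cont_nbhd l u Ic Iz x \<rho> = {y \<in> box_set l u. (\<forall>i\<in>Iz. y$i = x$i) \<and>
      sqrt (\<Sum>i\<in>Ic. (y$i - x$i)\<^sup>2) \<le> \<rho>}"

definition local_pareto_opt ::
  "real^'n \<Rightarrow> real^'n \<Rightarrow> 'n set \<Rightarrow> 'n set \<Rightarrow> nat \<Rightarrow> (nat \<Rightarrow> real^'n \<Rightarrow> real) \<Rightarrow>
   nat \<Rightarrow> (nat \<Rightarrow> real^'n \<Rightarrow> real) \<Rightarrow> real^'n \<Rightarrow> bool" where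
  "local_pareto_opt l u Ic Iz q f m g x \<longleftrightarrow>
     x \<in> feasible_set l u Iz m g \<and>
     \<not> (\<exists>y \<in> disc_nbhd l u Ic Iz x \<inter> feasible_set l u Iz m g. pareto_le q f y x) \<and>
     (\<exists>\<rho>>0. \<not> (\<exists>y \<in> cont_nbhd l u Ic Iz x \<rho> \<inter> feasible_set l u Iz m g. pareto_le q f y x))"

definition pareto_clarke_stationary ::
  "real^'n \<Rightarrow> real^'n \<Rightarrow> 'n set \<Rightarrow> 'n set \<Rightarrow> nat \<Rightarrow> (nat \<Rightarrow> real^'n \<Rightarrow> real) \<Rightarrow>
   nat \<Rightarrow> (nat \<Rightarrow> real^'n \<Rightarrow> real) \<Rightarrow> real^'n \<Rightarrow> bool" where
  "pareto_clarke_stationary l u Ic Iz q f m g x \<longleftrightarrow>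
     x \<in> feasible_set l u Iz m g \<and>
     (\<exists>(\<sigma>::nat \<Rightarrow> real) (lam::nat \<Rightarrow> real) vf vg.
        (\<forall>i<q. \<sigma> i \<ge> 0) \<and> (\<exists>i<q. \<sigma> i \<noteq> 0) \<and>
        (\<forall>j<m. lam j \<ge> 0 \<and> lam j * g j x = 0) \<and>
        (\<forall>i<q. vf i \<in> clarke_grad Iz (f i) x) \<and>
        (\<forall>j<m. vg j \<in> clarke_grad Iz (g j) x) \<and>
        (\<forall>d \<in> cont_dirs l u Ic Iz x.
           ((\<Sum>i<q. \<sigma> i *\<^sub>R vf i) + (\<Sum>j<m. lam j *\<^sub>R vg j)) \<bullet> d \<ge> 0))"

definition pareto_stationary ::
  "real^'n \<Rightarrow> real^'n \<Rightarrow> 'n set \<Rightarrow> 'n set \<Rightarrow> nat \<Rightarrow> (nat \<Rightarrow> real^'n \<Rightarrow> real) \<Rightarrow>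
   nat \<Rightarrow> (nat \<Rightarrow> real^'n \<Rightarrow> real) \<Rightarrow> real^'n \<Rightarrow> bool" where
  "pareto_stationary l u Ic Iz q f m g x \<longleftrightarrow>
     pareto_clarke_stationary l u Ic Iz q f m g x \<and>
     \<not> (\<exists>y \<in> disc_nbhd l u Ic Iz x \<inter> feasible_set l u Iz m g. pareto_le q f y x)"

end

theory Submission
  imports Defs
begin


definition S0 :: "'n set \<Rightarrow> (real^'n) set" where "S0 Iz = {s. \<forall>i\<in>Iz. s$i = 0}"
definition SZ :: "'n set \<Rightarrow> real^'n \<Rightarrow> (real^'n) set" where "SZ Iz x = {y. \<forall>i\<in>Iz. y$i = x$i}"
definition FF :: "'n set \<Rightarrow> real^'n \<Rightarrow> ((real^'n) \<times> real) filter" where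
  "FF Iz x = inf (nhds x) (principal (SZ Iz x)) \<times>\<^sub>F at_right (0::real)"
definition qr :: "(real^'n \<Rightarrow> real) \<Rightarrow> real^'n \<Rightarrow> (real^'n) \<times> real \<Rightarrow> real" where
  "qr h s z = (h (fst z + snd z *\<^sub>R s) - h (fst z)) / snd z"

lemma cd_eq: "clarke_dd Iz h x s = Limsup (FF Iz x) (\<lambda>z. ereal (qr h s z))"
  unfolding clarke_dd_def FF_def qr_def SZ_def
  by (intro arg_cong[where f="Limsup _"] ext) (simp add: split_beta)

lemma FF_nonbot: "FF Iz x \<noteq> bot"
proof -
  have "inf (nhds x) (principal (SZ Iz x)) \<noteq> bot"
  proof
    assume "inf (nhds x) (principal (SZ Iz x)) = bot"
    then have "eventually (\<lambda>_. False) (inf (nhds x) (principal (SZ Iz x)))" by simp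
    then have "eventually (\<lambda>y. y \<in> SZ Iz x \<longrightarrow> False) (nhds x)"
      by (simp add: eventually_inf_principal)
    then show False using eventually_nhds_x_imp_x by (force simp: SZ_def)
  qed
  then show ?thesis unfolding FF_def prod_filter_eq_bot by simp
qed

lemma FF_ev: "eventually (\<lambda>z. fst z \<in> SZ Iz x \<and> snd z > 0) (FF Iz x)"
proof -
  have 1: "eventually (\<lambda>y. y \<in> SZ Iz x) (inf (nhds x) (principal (SZ Iz x)))"
    by (simp add: eventually_inf_principal)
  have 2: "eventually (\<lambda>t::real. t > 0) (at_right 0)"
    by (simp add: eventually_at_right_less)
  show ?thesis unfolding FF_def eventually_prod_filter
    using 1 2 by (intro exI[of _ "\<lambda>y. y \<in> SZ Iz x"] exI[of _ "\<lambda>t. t > 0"]) auto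
qed

lemma FF_fst: "filterlim fst (inf (nhds x) (principal (SZ Iz x))) (FF Iz x)"
  unfolding FF_def by (rule filterlim_fst)
lemma FF_snd: "filterlim snd (at_right (0::real)) (FF Iz x)"
  unfolding FF_def by (rule filterlim_snd)

lemma FF_fst_tendsto: "(fst \<longlongrightarrow> x) (FF Iz x)"
  by (rule filterlim_mono[OF FF_fst inf_le1 order_refl])

lemma FF_snd_tendsto: "(snd \<longlongrightarrow> (0::real)) (FF Iz x)"
  by (rule filterlim_mono[OF FF_snd at_within_le_nhds order_refl])

lemma FF_shift:
  assumes "s \<in> S0 Iz"
  shows "filterlim (\<lambda>z. (fst z + snd z *\<^sub>R s, snd z)) (FF Iz x) (FF Iz x)"
proof -
  have t: "((\<lambda>z. fst z + snd z *\<^sub>R s) \<longlongrightarrow> x + 0 *\<^sub>R s) (FF Iz x)"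
    by (intro tendsto_intros FF_fst_tendsto FF_snd_tendsto)
  have e: "eventually (\<lambda>z. fst z + snd z *\<^sub>R s \<in> SZ Iz x) (FF Iz x)"
    using FF_ev[of Iz x] by eventually_elim (use assms in \<open>auto simp: SZ_def S0_def\<close>)
  have "filterlim (\<lambda>z. fst z + snd z *\<^sub>R s) (inf (nhds x) (principal (SZ Iz x))) (FF Iz x)"
    unfolding filterlim_inf filterlim_principal using t e by simp
  from filterlim_Pair[OF this FF_snd] show ?thesis unfolding FF_def .
qed

lemma FF_scale:
  assumes "c > (0::real)"
  shows "filterlim (\<lambda>z. (fst z, c * snd z)) (FF Iz x) (FF Iz x)"
proof -
  have t: "((\<lambda>z. c * snd z) \<longlongrightarrow> c * 0) (FF Iz x)"
    by (intro tendsto_intros FF_snd_tendsto)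
  have e: "eventually (\<lambda>z. c * snd z > 0) (FF Iz x)"
    using FF_ev[of Iz x] by eventually_elim (use assms in auto)
  have "filterlim (\<lambda>z. c * snd z) (at_right 0) (FF Iz x)"
    using tendsto_imp_filterlim_at_right[OF _ e] t by simp
  from filterlim_Pair[OF FF_fst this] show ?thesis unfolding FF_def .
qed

lemma FF_along: "filterlim (\<lambda>t. (x, t)) (FF Iz x) (at_right (0::real))"
proof -
  have "filterlim (\<lambda>t::real. x) (inf (nhds x) (principal (SZ Iz x))) (at_right 0)"
    unfolding filterlim_inf filterlim_principal by (auto simp: SZ_def)
  from filterlim_Pair[OF this filterlim_ident] show ?thesis unfolding FF_def .
qed


definition lipc :: "'n set \<Rightarrow> (real^'n \<Rightarrow> real) \<Rightarrow> real \<Rightarrow> bool" where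
  "lipc Iz h L \<longleftrightarrow> (\<forall>x y. (\<forall>i\<in>Iz. x$i = y$i) \<longrightarrow> \<bar>h x - h y\<bar> \<le> L * norm (x - y))"

lemma qr_bound:
  assumes lip: "lipc Iz h L" and s: "s \<in> S0 Iz" and z: "fst z \<in> SZ Iz x" "snd z > 0"
  shows "\<bar>qr h s z\<bar> \<le> L * norm s"
proof -
  obtain y t where zz: "z = (y, t)" by (cases z)
  have t: "t > 0" using z zz by simp
  have "\<forall>i\<in>Iz. (y + t *\<^sub>R s)$i = y$i" using s by (simp add: S0_def)
  then have "\<bar>h (y + t *\<^sub>R s) - h y\<bar> \<le> L * norm (y + t *\<^sub>R s - y)"
    using lip unfolding lipc_def by blast
  also have "\<dots> = t * (L * norm s)" using t by simp
  finally have "\<bar>h (y + t *\<^sub>R s) - h y\<bar> / t \<le> L * norm s"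
    using t by (simp add: divide_le_eq mult.commute)
  then show ?thesis using t by (simp add: qr_def zz)
qed

lemma cd_bounds:
  assumes lip: "lipc Iz h L" and s: "s \<in> S0 Iz"
  shows "ereal (- (L * norm s)) \<le> clarke_dd Iz h x s \<and> clarke_dd Iz h x s \<le> ereal (L * norm s)"
proof -
  have ev: "eventually (\<lambda>z. \<bar>qr h s z\<bar> \<le> L * norm s) (FF Iz x)"
    using FF_ev[of Iz x] by eventually_elim (use qr_bound[OF lip s] in auto)
  have 1: "eventually (\<lambda>z. ereal (- (L * norm s)) \<le> ereal (qr h s z)) (FF Iz x)"
    using ev by eventually_elim auto
  have 2: "eventually (\<lambda>z. ereal (qr h s z) \<le> ereal (L * norm s)) (FF Iz x)"
    using ev by eventually_elim auto
  show ?thesis unfolding cd_eq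
    using le_Limsup[OF FF_nonbot 1] Limsup_bounded[OF 2] by simp
qed

definition pp :: "'n set \<Rightarrow> (real^'n \<Rightarrow> real) \<Rightarrow> real^'n \<Rightarrow> real^'n \<Rightarrow> real" where
  "pp Iz h x s = real_of_ereal (clarke_dd Iz h x s)"

lemma cd_real:
  assumes lip: "lipc Iz h L" and s: "s \<in> S0 Iz"
  shows "clarke_dd Iz h x s = ereal (pp Iz h x s)"
proof -
  from cd_bounds[OF lip s, of x] have "\<bar>clarke_dd Iz h x s\<bar> \<noteq> \<infinity>" by auto
  then show ?thesis unfolding pp_def by (simp add: ereal_real)
qed

lemma pp_bound:
  assumes lip: "lipc Iz h L" and s: "s \<in> S0 Iz"
  shows "\<bar>pp Iz h x s\<bar> \<le> L * norm s"
  using cd_bounds[OF lip s, of x] cd_real[OF lip s, of x] by auto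

lemma cd_le_char:
  assumes "\<And>r. r > A \<Longrightarrow> eventually (\<lambda>z. qr h s z < r) (FF Iz x)"
  shows "clarke_dd Iz h x s \<le> ereal A"
  unfolding cd_eq Limsup_le_iff
proof (intro allI impI)
  fix y :: ereal assume y: "y > ereal A"
  show "eventually (\<lambda>z. y > ereal (qr h s z)) (FF Iz x)"
  proof (cases y)
    case (real r)
    then show ?thesis using assms[of r] y by (auto elim: eventually_mono)
  next
    case PInf then show ?thesis by simp
  next
    case MInf then show ?thesis using y by simp
  qed
qed

lemma cd_lessD:
  assumes "clarke_dd Iz h x s < ereal r"
  shows "eventually (\<lambda>z. qr h s z < r) (FF Iz x)"
  using Limsup_lessD[OF assms[unfolded cd_eq]] by (auto elim: eventually_mono)

lemma qr_add:
  assumes "snd z \<noteq> 0"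
  shows "qr h (s1 + s2) z = qr h s2 (fst z + snd z *\<^sub>R s1, snd z) + qr h s1 z"
  using assms unfolding qr_def by (simp add: scaleR_add_right add.assoc add_divide_distrib[symmetric])

lemma qr_scale:
  assumes "snd z > 0" "c > 0"
  shows "qr h (c *\<^sub>R s) z = c * qr h s (fst z, c * snd z)"
  using assms unfolding qr_def by (simp add: mult.commute)

lemma S0_add: "s1 \<in> S0 Iz \<Longrightarrow> s2 \<in> S0 Iz \<Longrightarrow> s1 + s2 \<in> S0 Iz"
  by (simp add: S0_def)
lemma S0_scale: "s \<in> S0 Iz \<Longrightarrow> c *\<^sub>R s \<in> S0 Iz"
  by (simp add: S0_def)
lemma S0_zero: "0 \<in> S0 Iz"
  by (simp add: S0_def)

lemma pp_subadd:
  assumes lip: "lipc Iz h L" and s1: "s1 \<in> S0 Iz" and s2: "s2 \<in> S0 Iz"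
  shows "pp Iz h x (s1 + s2) \<le> pp Iz h x s1 + pp Iz h x s2"
proof -
  let ?A = "pp Iz h x s1" and ?B = "pp Iz h x s2"
  have "clarke_dd Iz h x (s1 + s2) \<le> ereal (?A + ?B)"
  proof (rule cd_le_char)
    fix r assume r: "r > ?A + ?B"
    define e where "e = (r - ?A - ?B) / 2"
    have e: "e > 0" using r by (simp add: e_def)
    have re: "?A + e + (?B + e) = r" unfolding e_def by (simp add: field_simps)
    have ev1: "eventually (\<lambda>z. qr h s1 z < ?A + e) (FF Iz x)"
      by (rule cd_lessD) (use cd_real[OF lip s1, of x] e in simp)
    have ev2: "eventually (\<lambda>z. qr h s2 z < ?B + e) (FF Iz x)"
      by (rule cd_lessD) (use cd_real[OF lip s2, of x] e in simp)
    have ev2': "eventually (\<lambda>z. qr h s2 (fst z + snd z *\<^sub>R s1, snd z) < ?B + e) (FF Iz x)"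
      using FF_shift[OF s1, of x] ev2 unfolding filterlim_iff by blast
    show "eventually (\<lambda>z. qr h (s1 + s2) z < r) (FF Iz x)"
      using ev1 ev2' FF_ev[of Iz x]
    proof eventually_elim
      case (elim z)
      then have "snd z \<noteq> 0" by simp
      from qr_add[OF this, of h s1 s2] elim(1,2) re show ?case by linarith
    qed
  qed
  then show ?thesis using cd_real[OF lip S0_add[OF s1 s2], of x] by simp
qed

lemma pp_scale_le:
  assumes lip: "lipc Iz h L" and s: "s \<in> S0 Iz" and c: "c > 0"
  shows "pp Iz h x (c *\<^sub>R s) \<le> c * pp Iz h x s"
proof -
  let ?A = "pp Iz h x s"
  have "clarke_dd Iz h x (c *\<^sub>R s) \<le> ereal (c * ?A)"
  proof (rule cd_le_char)
    fix r assume r: "r > c * ?A"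
    have ev1: "eventually (\<lambda>z. qr h s z < r / c) (FF Iz x)"
      by (rule cd_lessD) (use cd_real[OF lip s, of x] r c in \<open>simp add: field_simps\<close>)
    have ev1': "eventually (\<lambda>z. qr h s (fst z, c * snd z) < r / c) (FF Iz x)"
      using FF_scale[OF c, of Iz x] ev1 unfolding filterlim_iff by blast
    show "eventually (\<lambda>z. qr h (c *\<^sub>R s) z < r) (FF Iz x)"
      using ev1' FF_ev[of Iz x]
    proof eventually_elim
      case (elim z)
      then show ?case using qr_scale[of z c h s] c by (simp add: field_simps)
    qed
  qed
  then show ?thesis using cd_real[OF lip S0_scale[OF s], of x c] by simp
qed

lemma pp_scale:
  assumes lip: "lipc Iz h L" and s: "s \<in> S0 Iz" and c: "c \<ge> 0"
  shows "pp Iz h x (c *\<^sub>R s) = c * pp Iz h x s"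
proof (cases "c = 0")
  case True
  then show ?thesis using pp_bound[OF lip S0_zero, of x] by simp
next
  case False
  then have c: "c > 0" using c by simp
  have 1: "pp Iz h x (c *\<^sub>R s) \<le> c * pp Iz h x s" by (rule pp_scale_le[OF lip s c])
  have "pp Iz h x s = pp Iz h x ((1/c) *\<^sub>R (c *\<^sub>R s))" using c by simp
  also have "\<dots> \<le> (1/c) * pp Iz h x (c *\<^sub>R s)"
    by (rule pp_scale_le[OF lip S0_scale[OF s]]) (use c in simp)
  finally have "c * pp Iz h x s \<le> pp Iz h x (c *\<^sub>R s)" using c by (simp add: field_simps)
  with 1 show ?thesis by simp
qed



definition prz :: "'n set \<Rightarrow> real^'n \<Rightarrow> real^'n" where
  "prz Iz w = (\<chi> i. if i \<in> Iz then 0 else w$i)"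

lemma prz_S0: "prz Iz w \<in> S0 Iz" by (simp add: prz_def S0_def)
lemma prz_add: "prz Iz (w1 + w2) = prz Iz w1 + prz Iz w2" by (simp add: prz_def vec_eq_iff)
lemma prz_scale: "prz Iz (c *\<^sub>R w) = c *\<^sub>R prz Iz w" by (simp add: prz_def vec_eq_iff)
lemma prz_id: "s \<in> S0 Iz \<Longrightarrow> prz Iz s = s" by (simp add: prz_def S0_def vec_eq_iff)
lemma inner_prz: "s \<in> S0 Iz \<Longrightarrow> inner s (prz Iz v) = inner s v"
  unfolding inner_vec_def by (rule sum.cong) (auto simp: prz_def S0_def)

lemma hb:
  fixes P :: "real^'n \<Rightarrow> real"
  assumes sub: "\<And>s1 s2. s1 \<in> S0 Iz \<Longrightarrow> s2 \<in> S0 Iz \<Longrightarrow> P (s1 + s2) \<le> P s1 + P s2"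
    and hom: "\<And>s c. s \<in> S0 Iz \<Longrightarrow> c \<ge> 0 \<Longrightarrow> P (c *\<^sub>R s) = c * P s"
    and a: "a \<in> S0 Iz" and e: "\<epsilon> > 0"
  shows "\<exists>v. v \<in> S0 Iz \<and> (\<forall>s\<in>S0 Iz. inner s v \<le> P s) \<and> P a - \<epsilon> \<le> inner a v"
proof -
  let ?pr = "prz Iz"
  define Pt where "Pt w = P (?pr w)" for w
  have P0: "P 0 = 0" using hom[of 0 0] by (simp add: S0_def)
  have Pt_hom: "Pt (c *\<^sub>R w) = c * Pt w" if "c \<ge> 0" for c w
    unfolding Pt_def prz_scale using hom[OF prz_S0 that] .
  have Pt_sub: "Pt (w1 + w2) \<le> Pt w1 + Pt w2" for w1 w2
    unfolding Pt_def prz_add using sub[OF prz_S0 prz_S0] .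
  have Pta: "Pt a = P a" by (simp add: Pt_def prz_id[OF a])
  have Pt0: "Pt 0 = 0" using Pt_hom[of 0 0] by simp
  define E where "E = {z::(real^'n) \<times> real. Pt (fst z + a) \<le> snd z + (P a - \<epsilon>)}"
  have cE: "convex E"
    unfolding convex_def
  proof (intro ballI allI impI)
    fix z1 z2 and u v :: real
    assume z: "z1 \<in> E" "z2 \<in> E" and uv: "0 \<le> u" "0 \<le> v" "u + v = 1"
    have eq: "fst (u *\<^sub>R z1 + v *\<^sub>R z2) + a = u *\<^sub>R (fst z1 + a) + v *\<^sub>R (fst z2 + a)"
    proof -
      have ua: "u *\<^sub>R a + v *\<^sub>R a = a" using uv(3) by (metis scaleR_add_left scaleR_one)
      have "u *\<^sub>R (fst z1 + a) + v *\<^sub>R (fst z2 + a) = (u *\<^sub>R fst z1 + v *\<^sub>R fst z2) + (u *\<^sub>R a + v *\<^sub>R a)"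
        by (simp add: scaleR_add_right algebra_simps)
      then show ?thesis using ua by simp
    qed
    have "Pt (u *\<^sub>R (fst z1 + a) + v *\<^sub>R (fst z2 + a)) \<le> u * Pt (fst z1 + a) + v * Pt (fst z2 + a)"
      using Pt_sub[of "u *\<^sub>R (fst z1 + a)" "v *\<^sub>R (fst z2 + a)"] Pt_hom[OF uv(1)] Pt_hom[OF uv(2)] by simp
    also have "\<dots> \<le> u * (snd z1 + (P a - \<epsilon>)) + v * (snd z2 + (P a - \<epsilon>))"
    proof (rule add_mono)
      show "u * Pt (fst z1 + a) \<le> u * (snd z1 + (P a - \<epsilon>))"
        by (rule mult_left_mono) (use z uv in \<open>auto simp: E_def\<close>)
      show "v * Pt (fst z2 + a) \<le> v * (snd z2 + (P a - \<epsilon>))"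
        by (rule mult_left_mono) (use z uv in \<open>auto simp: E_def\<close>)
    qed
    also have "\<dots> = snd (u *\<^sub>R z1 + v *\<^sub>R z2) + (P a - \<epsilon>)"
    proof -
      have uk: "u * (P a - \<epsilon>) + v * (P a - \<epsilon>) = P a - \<epsilon>" using uv(3) by (metis distrib_right mult_1)
      show ?thesis using uk by (simp add: distrib_left algebra_simps)
    qed
    finally show "u *\<^sub>R z1 + v *\<^sub>R z2 \<in> E" unfolding E_def using eq by simp
  qed
  have nE: "0 \<notin> E" using e Pta by (simp add: E_def)
  obtain \<gamma> where g0: "\<gamma> \<noteq> 0" and gE: "\<forall>z\<in>E. 0 \<le> inner \<gamma> z"
    using separating_hyperplane_set_0[OF cE nE] by blast
  define \<alpha> where "\<alpha> = fst \<gamma>"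
  define \<beta> where "\<beta> = snd \<gamma>"
  have gam: "\<gamma> = (\<alpha>, \<beta>)" by (simp add: \<alpha>_def \<beta>_def)
  have key: "0 \<le> inner \<alpha> (w - a) + \<beta> * (r - (P a - \<epsilon>))" if "Pt w \<le> r" for w r
  proof -
    have "(w - a, r - (P a - \<epsilon>)) \<in> E" using that by (simp add: E_def)
    from gE[rule_format, OF this] show ?thesis by (simp add: gam)
  qed
  have "0 \<le> \<beta> * \<epsilon>" using key[of a "P a"] Pta by simp
  then have b0: "\<beta> \<ge> 0" using e by (simp add: zero_le_mult_iff)
  have "\<beta> \<noteq> 0"
  proof
    assume b: "\<beta> = 0"
    have "0 \<le> inner \<alpha> (- \<alpha>)" using key[of "a - \<alpha>" "Pt (a - \<alpha>)"] b by simp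
    then have "\<alpha> \<bullet> \<alpha> \<le> 0" by simp
    then have "\<alpha> = 0" using inner_gt_zero_iff[of \<alpha>] by linarith
    then show False using g0 b gam by (simp add: zero_prod_def)
  qed
  with b0 have b: "\<beta> > 0" by simp
  have hom_ineq: "0 \<le> inner \<alpha> w + \<beta> * Pt w" for w
  proof (rule ccontr)
    define c where "c = inner \<alpha> w + \<beta> * Pt w"
    define K where "K = - inner \<alpha> a + \<beta> * (\<epsilon> - P a)"
    assume "\<not> 0 \<le> inner \<alpha> w + \<beta> * Pt w"
    then have c: "c < 0" by (simp add: c_def)
    define t where "t = (\<bar>K\<bar> + 1) / (- c)"
    have t: "t > 0" unfolding t_def using c by (intro divide_pos_pos) auto
    have tc: "t * c = - (\<bar>K\<bar> + 1)" using c by (simp add: t_def)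
    have "0 \<le> inner \<alpha> (t *\<^sub>R w - a) + \<beta> * (t * Pt w - (P a - \<epsilon>))"
      using key[of "t *\<^sub>R w" "t * Pt w"] Pt_hom[of t w] t by simp
    also have "\<dots> = t * c + K" by (simp add: c_def K_def algebra_simps inner_diff_right)
    finally show False using tc by linarith
  qed
  define v where "v = ?pr (- (1/\<beta>) *\<^sub>R \<alpha>)"
  show ?thesis
  proof (intro exI conjI ballI)
    show "v \<in> S0 Iz" by (simp add: v_def prz_S0)
    fix s assume s: "s \<in> S0 Iz"
    have "inner s v = - inner \<alpha> s / \<beta>" using inner_prz[OF s] by (simp add: v_def inner_commute)
    also have "\<dots> \<le> Pt s"
      by (rule iffD2[OF pos_divide_le_eq[OF b]]) (use hom_ineq[of s] in \<open>simp add: mult.commute\<close>)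
    finally show "inner s v \<le> P s" by (simp add: Pt_def prz_id[OF s])
  next
    have "0 \<le> - inner \<alpha> a + \<beta> * (\<epsilon> - P a)" using key[of 0 0] Pt0 by (simp add: algebra_simps)
    then have "P a - \<epsilon> \<le> - inner \<alpha> a / \<beta>"
      by (intro iffD2[OF pos_le_divide_eq[OF b]]) (simp add: algebra_simps)
    also have "\<dots> = inner a v" using inner_prz[OF a] by (simp add: v_def inner_commute)
    finally show "P a - \<epsilon> \<le> inner a v" .
  qed
qed

lemma lip_iff: "lipschitz_cont_vars Iz h \<longleftrightarrow> (\<exists>L. lipc Iz h L)"
  unfolding lipschitz_cont_vars_def lipc_def by simp

lemma S0_iff: "s \<in> S0 Iz \<longleftrightarrow> (\<forall>i\<in>Iz. s$i = 0)" by (simp add: S0_def)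

lemma grad_iff:
  assumes lip: "lipc Iz h L"
  shows "v \<in> clarke_grad Iz h x \<longleftrightarrow> v \<in> S0 Iz \<and> (\<forall>s\<in>S0 Iz. inner s v \<le> pp Iz h x s)"
proof -
  have "v \<in> clarke_grad Iz h x \<longleftrightarrow> v \<in> S0 Iz \<and> (\<forall>s. s \<in> S0 Iz \<longrightarrow> ereal (inner s v) \<le> clarke_dd Iz h x s)"
    by (simp add: clarke_grad_def S0_iff)
  also have "\<dots> \<longleftrightarrow> v \<in> S0 Iz \<and> (\<forall>s\<in>S0 Iz. inner s v \<le> pp Iz h x s)"
  proof -
    have eqs: "(ereal (inner s v) \<le> clarke_dd Iz h x s) \<longleftrightarrow> (inner s v \<le> pp Iz h x s)" if "s \<in> S0 Iz" for s
      using cd_real[OF lip that, of x] by simp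
    show ?thesis using eqs by blast
  qed
  finally show ?thesis .
qed

lemma grad_char:
  assumes lip: "lipc Iz h L"
  shows "clarke_grad Iz h x = (\<Inter>i\<in>Iz. {v. inner (axis i 1) v = 0}) \<inter> (\<Inter>s\<in>S0 Iz. {v. inner s v \<le> pp Iz h x s})"
proof (rule set_eqI)
  fix v
  show "v \<in> clarke_grad Iz h x \<longleftrightarrow> v \<in> (\<Inter>i\<in>Iz. {v. inner (axis i 1) v = 0}) \<inter> (\<Inter>s\<in>S0 Iz. {v. inner s v \<le> pp Iz h x s})"
    unfolding grad_iff[OF lip] by (simp add: S0_iff inner_axis')
qed

lemma grad_mem:
  assumes lip: "lipc Iz h L" and v: "v \<in> clarke_grad Iz h x"
  shows "v \<in> S0 Iz" "\<And>s. s \<in> S0 Iz \<Longrightarrow> inner s v \<le> pp Iz h x s"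
  using v unfolding grad_iff[OF lip] by auto

lemma grad_approx:
  assumes lip: "lipc Iz h L" and a: "a \<in> S0 Iz" and e: "\<epsilon> > 0"
  shows "\<exists>v\<in>clarke_grad Iz h x. pp Iz h x a - \<epsilon> \<le> inner a v"
proof -
  obtain v where v: "v \<in> S0 Iz" "\<forall>s\<in>S0 Iz. inner s v \<le> pp Iz h x s" "pp Iz h x a - \<epsilon> \<le> inner a v"
    using hb[of Iz "pp Iz h x", OF pp_subadd[OF lip] pp_scale[OF lip] a e] by blast
  have "v \<in> clarke_grad Iz h x" unfolding grad_iff[OF lip] using v by auto
  then show ?thesis using v by blast
qed

lemma grad_nonempty:
  assumes lip: "lipc Iz h L"
  shows "clarke_grad Iz h x \<noteq> {}"
proof -
  have "\<exists>v\<in>clarke_grad Iz h x. pp Iz h x 0 - 1 \<le> inner 0 v"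
    by (rule grad_approx[OF lip S0_zero]) simp
  then show ?thesis by blast
qed

lemma grad_convex:
  fixes h :: "real^'n \<Rightarrow> real"
  assumes lip: "lipc Iz h L"
  shows "convex (clarke_grad Iz h x)"
proof -
  have 1: "convex (\<Inter>i\<in>Iz. {v::real^'n. inner (axis i 1) v = 0})"
    by (rule convex_INT) (rule convex_hyperplane)
  have 2: "convex (\<Inter>s\<in>S0 Iz. {v. inner s v \<le> pp Iz h x s})"
    by (rule convex_INT) (rule convex_halfspace_le)
  show ?thesis unfolding grad_char[OF lip] by (rule convex_Int[OF 1 2])
qed

lemma grad_compact:
  fixes h :: "real^'n \<Rightarrow> real"
  assumes lip: "lipc Iz h L"
  shows "compact (clarke_grad Iz h x)"
proof -
  have cl: "closed (clarke_grad Iz h x)"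
  proof -
    have 1: "closed (\<Inter>i\<in>Iz. {v::real^'n. inner (axis i 1) v = 0})"
      by (rule closed_INT) (simp add: closed_hyperplane)
    have 2: "closed (\<Inter>s\<in>S0 Iz. {v. inner s v \<le> pp Iz h x s})"
      by (rule closed_INT) (simp add: closed_halfspace_le)
    show ?thesis unfolding grad_char[OF lip] by (rule closed_Int[OF 1 2])
  qed
  have "clarke_grad Iz h x \<subseteq> cball 0 \<bar>L\<bar>"
  proof
    fix v assume v: "v \<in> clarke_grad Iz h x"
    have vS: "v \<in> S0 Iz" using grad_mem(1)[OF lip v] .
    have "norm v ^ 2 = inner v v" by (simp add: power2_norm_eq_inner)
    also have "\<dots> \<le> pp Iz h x v" using grad_mem(2)[OF lip v vS] .
    also have "\<dots> \<le> \<bar>L\<bar> * norm v" proof -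
      have "L * norm v \<le> \<bar>L\<bar> * norm v" by (rule mult_right_mono) auto
      then show ?thesis using pp_bound[OF lip vS, of x] abs_ge_self[of "pp Iz h x v"] by linarith
    qed
    finally have n: "norm v * norm v \<le> \<bar>L\<bar> * norm v" by (simp add: power2_eq_square)
    have "norm v \<le> \<bar>L\<bar>"
    proof (cases "norm v = 0")
      case True then show ?thesis by simp
    next
      case False then have "norm v > 0" by simp
      with n show ?thesis by (simp add: mult_le_cancel_right)
    qed
    then show "v \<in> cball 0 \<bar>L\<bar>" by simp
  qed
  then have bd: "bounded (clarke_grad Iz h x)" by (rule bounded_subset[OF bounded_cball])
  show ?thesis unfolding compact_eq_bounded_closed using bd cl by (rule conjI)
qed

lemma descent:
  assumes "clarke_dd Iz h x a < 0"
  shows "eventually (\<lambda>t. h (x + t *\<^sub>R a) < h x) (at_right 0)"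
proof -
  have "eventually (\<lambda>z. qr h a z < 0) (FF Iz x)"
    using cd_lessD[of Iz h x a 0] assms by (simp add: zero_ereal_def)
  then have 1: "eventually (\<lambda>t. qr h a (x, t) < 0) (at_right 0)"
    using FF_along[of x Iz] unfolding filterlim_iff by blast
  have 2: "eventually (\<lambda>t::real. t > 0) (at_right 0)" by (simp add: eventually_at_right_less)
  show ?thesis using 1 2
  proof eventually_elim
    case (elim t)
    then have "(h (x + t *\<^sub>R a) - h x) / t < 0" by (simp add: qr_def)
    with elim(2) show ?case by (simp add: divide_less_0_iff)
  qed
qed

lemma cont_dirs_S0: "d \<in> cont_dirs l u Ic Iz x \<Longrightarrow> d \<in> S0 Iz"
  by (simp add: cont_dirs_def S0_def)

lemma norm_part_le:
  fixes w :: "real^'n"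
  shows "sqrt (\<Sum>i\<in>Ic. (w$i)\<^sup>2) \<le> norm w"
proof -
  have "(\<Sum>i\<in>Ic. (w$i)\<^sup>2) \<le> (\<Sum>i\<in>UNIV. (w$i)\<^sup>2)"
    by (rule sum_mono2) auto
  then show ?thesis by (simp add: norm_vec_def L2_set_def)
qed

lemma no_descent:
  fixes l u x a :: "real^'n" and Ic Iz :: "'n set"
    and q m :: nat and f g :: "nat \<Rightarrow> real^'n \<Rightarrow> real"
  assumes q: "q \<ge> 1" and IcIz: "Ic \<union> Iz = UNIV"
    and lipg: "\<forall>j<m. lipc Iz (g j) (Lg j)"
    and opt: "local_pareto_opt l u Ic Iz q f m g x"
    and aD: "a \<in> cont_dirs l u Ic Iz x"
    and df: "\<forall>i<q. eventually (\<lambda>t. f i (x + t *\<^sub>R a) < f i x) (at_right 0)"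
    and dg: "\<forall>j<m. g j x = 0 \<longrightarrow> eventually (\<lambda>t. g j (x + t *\<^sub>R a) < g j x) (at_right 0)"
  shows False
proof -
  have xF: "x \<in> feasible_set l u Iz m g" using opt by (simp add: local_pareto_opt_def)
  obtain \<rho> where rho: "\<rho> > 0" and nc: "\<not> (\<exists>y \<in> cont_nbhd l u Ic Iz x \<rho> \<inter> feasible_set l u Iz m g. pareto_le q f y x)"
    using opt by (auto simp: local_pareto_opt_def)
  have xbox: "\<forall>i. l$i \<le> x$i \<and> x$i \<le> u$i" and xint: "\<forall>i\<in>Iz. x$i \<in> \<int>" and xg: "\<forall>j<m. g j x \<le> 0"
    using xF by (auto simp: feasible_set_def box_set_def int_set_def)
  have aS: "a \<in> S0 Iz" using cont_dirs_S0[OF aD] .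
  have aZ: "\<forall>i\<in>Iz. a$i = 0" using aS by (simp add: S0_def)
  have tpos: "eventually (\<lambda>t::real. t > 0) (at_right 0)" by (simp add: eventually_at_right_less)
  have tlim: "((\<lambda>t::real. t) \<longlongrightarrow> 0) (at_right 0)" by (rule tendsto_ident_at)
  have evF: "eventually (\<lambda>t. \<forall>i\<in>{..<q}. f i (x + t *\<^sub>R a) < f i x) (at_right 0)"
    by (rule eventually_ball_finite) (use df in auto)
  have evG: "eventually (\<lambda>t. \<forall>j\<in>{..<m}. g j (x + t *\<^sub>R a) < 0) (at_right 0)"
  proof (rule eventually_ball_finite)
    show "\<forall>j\<in>{..<m}. eventually (\<lambda>t. g j (x + t *\<^sub>R a) < 0) (at_right 0)"
    proof
      fix j assume j: "j \<in> {..<m}"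
      show "eventually (\<lambda>t. g j (x + t *\<^sub>R a) < 0) (at_right 0)"
      proof (cases "g j x = 0")
        case True
        then show ?thesis using dg j by auto
      next
        case False
        then have neg: "g j x < 0" using xg j by force
        have lim: "((\<lambda>t. Lg j * (t * norm a)) \<longlongrightarrow> Lg j * (0 * norm a)) (at_right 0)"
          by (intro tendsto_intros tlim)
        have "eventually (\<lambda>t. Lg j * (t * norm a) < - g j x) (at_right 0)"
          using order_tendstoD(2)[OF lim] neg by simp
        then show ?thesis using tpos
        proof eventually_elim
          case (elim t)
          have "\<forall>i\<in>Iz. (x + t *\<^sub>R a)$i = x$i" using aZ by simp
          then have "\<bar>g j (x + t *\<^sub>R a) - g j x\<bar> \<le> Lg j * norm (x + t *\<^sub>R a - x)"
            using lipg j unfolding lipc_def by blast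
          also have "\<dots> = Lg j * (t * norm a)" using elim(2) by simp
          finally show ?case using elim(1) by linarith
        qed
      qed
    qed
  qed auto
  have evB: "eventually (\<lambda>t. \<forall>i. l$i \<le> (x + t *\<^sub>R a)$i \<and> (x + t *\<^sub>R a)$i \<le> u$i) (at_right 0)"
  proof (rule eventually_all_finite)
    fix i
    have lim: "((\<lambda>t. x$i + t * a$i) \<longlongrightarrow> x$i + 0 * a$i) (at_right 0)"
      by (intro tendsto_intros tlim)
    have up: "eventually (\<lambda>t. x$i + t * a$i \<le> u$i) (at_right 0)"
    proof (cases "x$i < u$i")
      case True
      then show ?thesis using order_tendstoD(2)[OF lim, of "u$i"] by (auto elim: eventually_mono)
    next
      case False
      then have eq: "x$i = u$i" using xbox[rule_format, of i] by linarith
      have "a$i \<le> 0"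
      proof (cases "i \<in> Iz")
        case True then show ?thesis using aZ by simp
      next
        case False then have "i \<in> Ic" using IcIz by auto
        then show ?thesis using aD eq by (simp add: cont_dirs_def)
      qed
      then show ?thesis using tpos eq by (auto elim!: eventually_mono simp: mult_nonneg_nonpos)
    qed
    have lo: "eventually (\<lambda>t. l$i \<le> x$i + t * a$i) (at_right 0)"
    proof (cases "l$i < x$i")
      case True
      then show ?thesis using order_tendstoD(1)[OF lim, of "l$i"] by (auto elim: eventually_mono)
    next
      case False
      then have eq: "x$i = l$i" using xbox[rule_format, of i] by linarith
      have "a$i \<ge> 0"
      proof (cases "i \<in> Iz")
        case True then show ?thesis using aZ by simp
      next
        case False then have "i \<in> Ic" using IcIz by auto
        then show ?thesis using aD eq by (simp add: cont_dirs_def)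
      qed
      then show ?thesis using tpos eq by (auto elim!: eventually_mono)
    qed
    show "eventually (\<lambda>t. l$i \<le> (x + t *\<^sub>R a)$i \<and> (x + t *\<^sub>R a)$i \<le> u$i) (at_right 0)"
      using up lo by eventually_elim simp
  qed
  have evN: "eventually (\<lambda>t. norm (t *\<^sub>R a) < \<rho>) (at_right 0)"
  proof -
    have lim: "((\<lambda>t. norm (t *\<^sub>R a)) \<longlongrightarrow> norm (0 *\<^sub>R a)) (at_right 0)"
      by (intro tendsto_intros tlim)
    show ?thesis using order_tendstoD(2)[OF lim] rho by simp
  qed
  have "eventually (\<lambda>t. t > 0 \<and> (\<forall>i\<in>{..<q}. f i (x + t *\<^sub>R a) < f i x) \<and>
      (\<forall>j\<in>{..<m}. g j (x + t *\<^sub>R a) < 0) \<and>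
      (\<forall>i. l$i \<le> (x + t *\<^sub>R a)$i \<and> (x + t *\<^sub>R a)$i \<le> u$i) \<and> norm (t *\<^sub>R a) < \<rho>) (at_right 0)"
    using tpos evF evG evB evN by eventually_elim blast
  note ev = this
  have nb: "at_right (0::real) \<noteq> bot" by simp
  from eventually_happens[OF ev] nb obtain t where tt: "t > 0 \<and> (\<forall>i\<in>{..<q}. f i (x + t *\<^sub>R a) < f i x) \<and>
      (\<forall>j\<in>{..<m}. g j (x + t *\<^sub>R a) < 0) \<and>
      (\<forall>i. l$i \<le> (x + t *\<^sub>R a)$i \<and> (x + t *\<^sub>R a)$i \<le> u$i) \<and> norm (t *\<^sub>R a) < \<rho>"
    by blast
  from tt have t: "t > 0" "\<forall>i\<in>{..<q}. f i (x + t *\<^sub>R a) < f i x"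
      "\<forall>j\<in>{..<m}. g j (x + t *\<^sub>R a) < 0"
      "\<forall>i. l$i \<le> (x + t *\<^sub>R a)$i \<and> (x + t *\<^sub>R a)$i \<le> u$i" "norm (t *\<^sub>R a) < \<rho>"
    by blast+
  define y where "y = x + t *\<^sub>R a"
  have yZ: "\<forall>i\<in>Iz. y$i = x$i" using aZ by (simp add: y_def)
  have ybox: "y \<in> box_set l u" using t(4) by (simp add: box_set_def y_def)
  have yg: "\<forall>j<m. g j y \<le> 0"
  proof (intro allI impI)
    fix j assume j: "j < m"
    have "g j y < 0" using t(3) j by (simp add: y_def)
    then show "g j y \<le> 0" by (rule less_imp_le)
  qed
  have yi: "\<forall>i\<in>Iz. y$i \<in> \<int>" using yZ xint by simp
  have yF: "y \<in> feasible_set l u Iz m g"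
    using ybox yi yg by (simp add: feasible_set_def int_set_def)
  have "sqrt (\<Sum>i\<in>Ic. (y$i - x$i)\<^sup>2) \<le> norm (t *\<^sub>R a)"
    using norm_part_le[of "t *\<^sub>R a" Ic] by (simp add: y_def)
  then have yN: "y \<in> cont_nbhd l u Ic Iz x \<rho>"
    using ybox yZ t(5) by (simp add: cont_nbhd_def)
  have fle: "\<forall>i<q. f i y \<le> f i x" using t(2) by (simp add: y_def less_imp_le)
  have "f 0 y < f 0 x" using t(2) q by (simp add: y_def)
  then have "\<exists>i<q. f i y \<noteq> f i x" using q by (intro exI[of _ 0]) simp
  with fle have "pareto_le q f y x" by (simp add: pareto_le_def)
  then show False using nc yF yN by blast
qed

lemma axis_Ds:
  assumes "\<forall>d\<in>D. 0 \<le> c * d$i"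
  shows "axis i c \<in> {\<xi>::real^'n. \<forall>d\<in>D. 0 \<le> inner \<xi> d}"
  using assms by (simp add: inner_axis')

theorem mainTheorem1:
  fixes l u x :: "real^'n" and Ic Iz :: "'n set"
    and q m :: nat and f g :: "nat \<Rightarrow> real^'n \<Rightarrow> real"
  assumes "q \<ge> 1"
    and "Ic \<union> Iz = UNIV" and "Ic \<inter> Iz = {}" and "Ic \<noteq> {}" and "Iz \<noteq> {}"
    and "\<forall>i. l$i < u$i"
    and "\<forall>i\<in>Iz. l$i \<in> \<int> \<and> u$i \<in> \<int>"
    and "\<forall>i<q. lipschitz_cont_vars Iz (f i)"
    and "\<forall>j<m. lipschitz_cont_vars Iz (g j)"
    and "local_pareto_opt l u Ic Iz q f m g x"
    and "\<exists>d \<in> cont_dirs l u Ic Iz x. \<forall>j<m. g j x = 0 \<longrightarrow>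
           (\<forall>\<xi> \<in> clarke_grad Iz (g j) x. \<xi> \<bullet> d < 0)"
  shows "pareto_stationary l u Ic Iz q f m g x"
proof -
  have "\<forall>i. \<exists>L. i < q \<longrightarrow> lipc Iz (f i) L" using assms(8) by (auto simp: lip_iff)
  from choice[OF this] obtain Lf where lipf: "\<forall>i. i < q \<longrightarrow> lipc Iz (f i) (Lf i)" by blast
  have "\<forall>j. \<exists>L. j < m \<longrightarrow> lipc Iz (g j) L" using assms(9) by (auto simp: lip_iff)
  from choice[OF this] obtain Lg where lipg: "\<forall>j. j < m \<longrightarrow> lipc Iz (g j) (Lg j)" by blast
  have xF: "x \<in> feasible_set l u Iz m g" using assms(10) by (simp add: local_pareto_opt_def)
  have nd: "\<not> (\<exists>y \<in> disc_nbhd l u Ic Iz x \<inter> feasible_set l u Iz m g. pareto_le q f y x)"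
    using assms(10) by (simp add: local_pareto_opt_def)
  obtain d0 where d0: "d0 \<in> cont_dirs l u Ic Iz x"
    and cq: "\<forall>j<m. g j x = 0 \<longrightarrow> (\<forall>\<xi> \<in> clarke_grad Iz (g j) x. \<xi> \<bullet> d0 < 0)"
    using assms(11) by blast
  define act where "act = {j. j < m \<and> g j x = 0}"
  define I :: "(nat + nat) set" where "I = Inl ` {..<q} \<union> Inr ` act"
  define \<phi> where "\<phi> k = (case k of Inl i \<Rightarrow> f i | Inr j \<Rightarrow> g j)" for k
  define L\<phi> where "L\<phi> k = (case k of Inl i \<Rightarrow> Lf i | Inr j \<Rightarrow> Lg j)" for k
  have finact: "finite act" by (simp add: act_def)
  have finI: "finite I" using finact by (simp add: I_def)
  have lip\<phi>: "lipc Iz (\<phi> k) (L\<phi> k)" if "k \<in> I" for k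
    using that lipf lipg by (auto simp: I_def act_def \<phi>_def L\<phi>_def)
  define G where "G k = clarke_grad Iz (\<phi> k) x" for k
  define C where "C = convex hull (\<Union>k\<in>I. G k)"
  define D where "D = cont_dirs l u Ic Iz x"
  define Ds where "Ds = {\<xi>::real^'n. \<forall>d\<in>D. 0 \<le> inner \<xi> d}"
  have Gcvx: "convex (G k) \<and> G k \<noteq> {}" if "k \<in> I" for k
    using grad_convex[OF lip\<phi>[OF that]] grad_nonempty[OF lip\<phi>[OF that]] by (simp add: G_def)
  show ?thesis
  proof (cases "C \<inter> Ds = {}")
    case True
    have cC: "convex C" by (simp add: C_def convex_convex_hull)
    have kC: "compact C" unfolding C_def
      by (intro compact_convex_hull compact_UN finI) (simp add: G_def grad_compact[OF lip\<phi>])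
    have I0: "Inl 0 \<in> I" using assms(1) by (simp add: I_def)
    have nC: "C \<noteq> {}"
    proof -
      obtain v where v: "v \<in> G (Inl 0)" using Gcvx[OF I0] by blast
      have "v \<in> (\<Union>k\<in>I. G k)" using I0 v by (rule UN_I)
      then have "v \<in> C" unfolding C_def by (rule hull_inc)
      then show ?thesis by auto
    qed
    have DsI: "Ds = (\<Inter>d\<in>D. {\<xi>. inner d \<xi> \<ge> 0})" by (auto simp: Ds_def inner_commute)
    have cDs: "convex Ds" unfolding DsI by (intro convex_INT convex_halfspace_ge)
    have clDs: "closed Ds" unfolding DsI by (intro closed_INT ballI closed_halfspace_ge)
    obtain a b where ab1: "\<forall>\<xi>\<in>C. inner a \<xi> < b" and ab2: "\<forall>\<eta>\<in>Ds. inner a \<eta> > b"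
      using separating_hyperplane_compact_closed[OF cC kC nC cDs clDs True] by blast
    have "0 \<in> Ds" by (simp add: Ds_def)
    then have b: "b < 0" using ab2 by force
    have aDs: "inner a \<eta> \<ge> 0" if eta: "\<eta> \<in> Ds" for \<eta>
    proof (rule ccontr)
      assume "\<not> 0 \<le> inner a \<eta>"
      then have n: "inner a \<eta> < 0" by simp
      define t where "t = b / inner a \<eta>"
      have t: "t > 0" unfolding t_def using n b by (simp add: divide_neg_neg)
      have "t *\<^sub>R \<eta> \<in> Ds" using eta t by (simp add: Ds_def)
      then have "inner a (t *\<^sub>R \<eta>) > b" using ab2 by blast
      moreover have "inner a (t *\<^sub>R \<eta>) = b" using n by (simp add: t_def)
      ultimately show False by simp
    qed
    have aax: "inner a (axis i c) = a$i * c" for i c by (simp add: inner_axis)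
    have aD: "a \<in> D"
      unfolding D_def cont_dirs_def mem_Collect_eq
    proof (intro conjI ballI impI)
      fix i assume i: "i \<in> Iz"
      have m1: "axis i 1 \<in> Ds" "axis i (-1) \<in> Ds" unfolding Ds_def
        using axis_Ds[of D 1 i] axis_Ds[of D "-1" i] i by (auto simp: D_def cont_dirs_def)
      have p1: "0 \<le> a$i" using aDs[OF m1(1)] aax[of i 1] by simp
      have p2: "0 \<le> - a$i" using aDs[OF m1(2)] aax[of i "-1"] by simp
      show "a$i = 0" using p1 p2 by linarith
    next
      fix i assume i: "i \<in> Ic" and "x$i = l$i"
      then have m1: "axis i 1 \<in> Ds" unfolding Ds_def
        using axis_Ds[of D 1 i] by (auto simp: D_def cont_dirs_def)
      show "a$i \<ge> 0" using aDs[OF m1] aax[of i 1] by simp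
    next
      fix i assume i: "i \<in> Ic" and "x$i = u$i"
      then have m1: "axis i (-1) \<in> Ds" unfolding Ds_def
        using axis_Ds[of D "-1" i] by (auto simp: D_def cont_dirs_def)
      show "a$i \<le> 0" using aDs[OF m1] aax[of i "-1"] by simp
    qed
    have aS: "a \<in> S0 Iz" using aD cont_dirs_S0 by (simp add: D_def)
    have neg: "clarke_dd Iz (\<phi> k) x a < 0" if k: "k \<in> I" for k
    proof -
      have e: "- b / 2 > 0" using b by simp
      obtain v where v: "v \<in> G k" and pv: "pp Iz (\<phi> k) x a - (- b / 2) \<le> inner a v"
        using grad_approx[OF lip\<phi>[OF k] aS e, of x] by (auto simp: G_def)
      have "v \<in> (\<Union>k\<in>I. G k)" using k v by (rule UN_I)
      then have "v \<in> C" unfolding C_def by (rule hull_inc)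
      then have "inner a v < b" using ab1 by blast
      then have "pp Iz (\<phi> k) x a < 0" using pv b by linarith
      then show ?thesis using cd_real[OF lip\<phi>[OF k] aS, of x] by (simp add: zero_ereal_def)
    qed
    have df: "\<forall>i<q. eventually (\<lambda>t. f i (x + t *\<^sub>R a) < f i x) (at_right 0)"
    proof (intro allI impI)
      fix i assume "i < q"
      then have "Inl i \<in> I" by (simp add: I_def)
      from descent[OF neg[OF this]] show "eventually (\<lambda>t. f i (x + t *\<^sub>R a) < f i x) (at_right 0)"
        by (simp add: \<phi>_def)
    qed
    have dg: "\<forall>j<m. g j x = 0 \<longrightarrow> eventually (\<lambda>t. g j (x + t *\<^sub>R a) < g j x) (at_right 0)"
    proof (intro allI impI)
      fix j assume "j < m" "g j x = 0"
      then have "Inr j \<in> I" by (simp add: I_def act_def)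
      from descent[OF neg[OF this]] show "eventually (\<lambda>t. g j (x + t *\<^sub>R a) < g j x) (at_right 0)"
        by (simp add: \<phi>_def)
    qed
    have False
      using no_descent[OF assms(1) assms(2) _ assms(10) aD[unfolded D_def] df dg] lipg by blast
    then show ?thesis ..
  next
    case False
    then obtain \<xi> where \<xi>C: "\<xi> \<in> C" and \<xi>Ds: "\<xi> \<in> Ds" by blast
    from \<xi>C obtain c s where c0: "\<forall>k\<in>I. 0 \<le> c k" and c1: "sum c I = 1"
      and sG: "\<forall>k\<in>I. s k \<in> G k" and \<xi>: "\<xi> = (\<Sum>k\<in>I. c k *\<^sub>R s k)"
    proof -
      have hulleq: "C = {sum (\<lambda>i. c i *\<^sub>R s i) I | c s. (\<forall>i\<in>I. c i \<ge> 0) \<and> sum c I = 1 \<and> (\<forall>i\<in>I. s i \<in> G i)}"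
        unfolding C_def by (rule convex_hull_finite_union[OF finI]) (use Gcvx in blast)
      from \<xi>C[unfolded hulleq] show ?thesis using that by blast
    qed
    define \<sigma> where "\<sigma> i = c (Inl i)" for i
    define lam where "lam j = (if j \<in> act then c (Inr j) else 0)" for j
    define vf where "vf i = s (Inl i)" for i
    define vg where "vg j = (if j \<in> act then s (Inr j) else (SOME v. v \<in> clarke_grad Iz (g j) x))" for j
    have disj: "Inl ` {..<q} \<inter> Inr ` act = ({} :: (nat + nat) set)" by auto
    have sumsplit: "(\<Sum>k\<in>I. F k) = (\<Sum>i<q. F (Inl i)) + (\<Sum>j\<in>act. F (Inr j))" for F :: "nat + nat \<Rightarrow> 'z::comm_monoid_add"
      unfolding I_def using finact
      by (subst sum.union_disjoint) (auto simp: sum.reindex)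
    have sum_g: "(\<Sum>j<m. lam j *\<^sub>R vg j) = (\<Sum>j\<in>act. c (Inr j) *\<^sub>R s (Inr j))"
    proof -
      have "(\<Sum>j<m. lam j *\<^sub>R vg j) = (\<Sum>j<m. if j \<in> act then c (Inr j) *\<^sub>R s (Inr j) else 0)"
        by (rule sum.cong) (auto simp: lam_def vg_def)
      also have "\<dots> = (\<Sum>j\<in>{j\<in>{..<m}. j \<in> act}. c (Inr j) *\<^sub>R s (Inr j))"
        by (rule sum.inter_filter[symmetric]) simp
      also have "{j\<in>{..<m}. j \<in> act} = act" by (auto simp: act_def)
      finally show ?thesis .
    qed
    have \<xi>eq: "(\<Sum>i<q. \<sigma> i *\<^sub>R vf i) + (\<Sum>j<m. lam j *\<^sub>R vg j) = \<xi>"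
      unfolding sum_g \<xi> sumsplit[of "\<lambda>k. c k *\<^sub>R s k"] by (simp add: \<sigma>_def vf_def)
    have \<sigma>nz: "\<exists>i<q. \<sigma> i \<noteq> 0"
    proof (rule ccontr)
      assume "\<not> (\<exists>i<q. \<sigma> i \<noteq> 0)"
      then have z: "\<forall>i<q. c (Inl i) = 0" by (simp add: \<sigma>_def)
      have cs: "(\<Sum>j\<in>act. c (Inr j)) = 1" using c1 sumsplit[of c] z by simp
      have \<xi>2: "\<xi> = (\<Sum>j\<in>act. c (Inr j) *\<^sub>R s (Inr j))" using \<xi> sumsplit[of "\<lambda>k. c k *\<^sub>R s k"] z by simp
      have cnn: "\<forall>j\<in>act. 0 \<le> c (Inr j)" using c0 by (simp add: I_def)
      have ineg: "\<forall>j\<in>act. inner (s (Inr j)) d0 < 0"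
      proof
        fix j assume j: "j \<in> act"
        then have "Inr j \<in> I" by (simp add: I_def)
        then have jI: "Inr j \<in> I" .
        from sG[rule_format, OF jI] have "s (Inr j) \<in> clarke_grad Iz (g j) x" by (simp add: G_def \<phi>_def)
        then show "inner (s (Inr j)) d0 < 0" using cq j by (auto simp: act_def)
      qed
      obtain j0 where j0: "j0 \<in> act" "c (Inr j0) > 0"
      proof (rule ccontr)
        assume "\<not> thesis"
        then have "\<forall>j\<in>act. c (Inr j) = 0" using cnn that by force
        then have "(\<Sum>j\<in>act. c (Inr j)) = 0" by simp
        then show False using cs by simp
      qed
      have "(\<Sum>j\<in>act. c (Inr j) * inner (s (Inr j)) d0) < (\<Sum>j\<in>act. 0)"
      proof (rule sum_strict_mono_ex1[OF finact])
        show "\<forall>j\<in>act. c (Inr j) * inner (s (Inr j)) d0 \<le> 0"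
          using cnn ineg by (auto intro: mult_nonneg_nonpos less_imp_le)
        show "\<exists>j\<in>act. c (Inr j) * inner (s (Inr j)) d0 < 0"
          using j0 ineg by (auto intro: mult_pos_neg)
      qed
      then have "inner \<xi> d0 < 0" unfolding \<xi>2 by (simp add: inner_sum_left)
      moreover have "0 \<le> inner \<xi> d0" using \<xi>Ds d0 by (simp add: Ds_def D_def)
      ultimately show False by simp
    qed
    have vfG: "\<forall>i<q. vf i \<in> clarke_grad Iz (f i) x"
    proof (intro allI impI)
      fix i assume "i < q"
      then have "Inl i \<in> I" by (simp add: I_def)
      from sG[rule_format, OF this] show "vf i \<in> clarke_grad Iz (f i) x" by (simp add: vf_def G_def \<phi>_def)
    qed
    have vgG: "\<forall>j<m. vg j \<in> clarke_grad Iz (g j) x"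
    proof (intro allI impI)
      fix j assume j: "j < m"
      show "vg j \<in> clarke_grad Iz (g j) x"
      proof (cases "j \<in> act")
        case True
        then have "Inr j \<in> I" by (simp add: I_def)
        from sG[rule_format, OF this] show ?thesis using True by (simp add: vg_def G_def \<phi>_def)
      next
        case False
        have "clarke_grad Iz (g j) x \<noteq> {}" using grad_nonempty lipg j by blast
        then show ?thesis using False by (simp add: vg_def some_in_eq)
      qed
    qed
    have \<sigma>0: "\<forall>i<q. \<sigma> i \<ge> 0" using c0 by (simp add: \<sigma>_def I_def)
    have lam0: "\<forall>j<m. lam j \<ge> 0 \<and> lam j * g j x = 0" using c0 by (simp add: lam_def I_def act_def)
    have dir: "\<forall>d \<in> cont_dirs l u Ic Iz x. ((\<Sum>i<q. \<sigma> i *\<^sub>R vf i) + (\<Sum>j<m. lam j *\<^sub>R vg j)) \<bullet> d \<ge> 0"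
      using \<xi>Ds unfolding \<xi>eq by (simp add: Ds_def D_def)
    show ?thesis
      unfolding pareto_stationary_def pareto_clarke_stationary_def
      using xF nd \<sigma>0 \<sigma>nz lam0 vfG vgG dir by blast
  qed
qed

end
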